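(* Assume $\Sigma_n$ and $V_n$ are invertible and $\mathcal{D}_n^{\Sigma} := \|\Sigma_n^{-1/2}\widehat{\Sigma}_n\Sigma_n^{-1/2} - I_d\|_{\mathrm{op}} < 1$. Then \[ \max_{1\le j\le d}\left|\frac{\widehat{\beta}_j - \beta_j - n^{-1}\sum_{i=1}^n \psi_{ij}}{\sqrt{(\Sigma_n^{-1}V_n\Sigma_n^{-1})_{jj}}}\right| \le \kappa(\Sigma_n^{-1/2}V_n^{1/2})\frac{\mathcal{D}_n^{\Sigma}}{1 - \mathcal{D}_n^{\Sigma}}\Big\|\frac{1}{n}\sum_{i=1}^n \psi_i\Big\|_{\Sigma_n V^{-1}_n\Sigma_n}, \] where $\psi_i := \Sigma_n^{-1}X_i(Y_i-X_i^\top\beta)$ and $\psi_{ij}$ is its $j$-th coordinate.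
   Context: Let $(X_1,Y_1),\dots,(X_n,Y_n)$ be random elements of $\mathbb{R}^d\times\mathbb{R}$ (not necessarily independent or identically distributed) with finite second moments. Define $\Sigma_n := n^{-1}\sum_{i=1}^n\mathbb{E}[X_iX_i^\top]$, $\Gamma_n := n^{-1}\sum_{i=1}^n\mathbb{E}[X_iY_i]$, $\beta := \Sigma_n^{-1}\Gamma_n$, $\widehat{\Sigma}_n := n^{-1}\sum_{i=1}^n X_iX_i^\top$, $\widehat{\Gamma}_n := n^{-1}\sum_{i=1}^n X_iY_i$, $\widehat\beta := \widehat{\Sigma}_n^{-1}\widehat{\Gamma}_n$, and $V_n := \mathrm{Var}\big(n^{-1}\sum_{i=1}^n X_i(Y_i - X_i^\top\beta)\big)$. For positive definite $A$, $\|x\|_A := \sqrt{x^\top A x}$; $\kappa(A) := \|A^{-1}\|_{\mathrm{op}}\|A\|_{\mathrm{op}}$. *)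

theory Defs
  imports "HOL-Probability.Probability"
begin

definition outer :: "real^'d \<Rightarrow> real^'d \<Rightarrow> real^'d^'d" where
  "outer x y = (\<chi> i j. x$i * y$j)"

definition psd_mat :: "real^'d^'d \<Rightarrow> bool" where
  "psd_mat A \<longleftrightarrow> transpose A = A \<and> (\<forall>x. 0 \<le> x \<bullet> (A *v x))"

definition mat_sqrt :: "real^'d^'d \<Rightarrow> real^'d^'d" where
  "mat_sqrt A = (THE S. psd_mat S \<and> S ** S = A)"

definition op_norm :: "real^'d^'d \<Rightarrow> real" where
  "op_norm A = onorm (\<lambda>x. A *v x)"

definition cond_num :: "real^'d^'d \<Rightarrow> real" where
  "cond_num A = op_norm (matrix_inv A) * op_norm A"

definition wnorm :: "real^'d^'d \<Rightarrow> real^'d \<Rightarrow> real" where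
  "wnorm A x = sqrt (x \<bullet> (A *v x))"

definition Sigma_n :: "'a measure \<Rightarrow> (nat \<Rightarrow> 'a \<Rightarrow> real^'d) \<Rightarrow> nat \<Rightarrow> real^'d^'d" where
  "Sigma_n M X n = (1 / real n) *\<^sub>R (\<Sum>i\<in>{1..n}. integral\<^sup>L M (\<lambda>\<omega>. outer (X i \<omega>) (X i \<omega>)))"

definition Gamma_n :: "'a measure \<Rightarrow> (nat \<Rightarrow> 'a \<Rightarrow> real^'d) \<Rightarrow> (nat \<Rightarrow> 'a \<Rightarrow> real) \<Rightarrow> nat \<Rightarrow> real^'d" where
  "Gamma_n M X Y n = (1 / real n) *\<^sub>R (\<Sum>i\<in>{1..n}. integral\<^sup>L M (\<lambda>\<omega>. Y i \<omega> *\<^sub>R X i \<omega>))"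

definition beta_pop :: "'a measure \<Rightarrow> (nat \<Rightarrow> 'a \<Rightarrow> real^'d) \<Rightarrow> (nat \<Rightarrow> 'a \<Rightarrow> real) \<Rightarrow> nat \<Rightarrow> real^'d" where
  "beta_pop M X Y n = matrix_inv (Sigma_n M X n) *v Gamma_n M X Y n"

definition Sigma_hat :: "(nat \<Rightarrow> 'a \<Rightarrow> real^'d) \<Rightarrow> nat \<Rightarrow> 'a \<Rightarrow> real^'d^'d" where
  "Sigma_hat X n \<omega> = (1 / real n) *\<^sub>R (\<Sum>i\<in>{1..n}. outer (X i \<omega>) (X i \<omega>))"

definition Gamma_hat :: "(nat \<Rightarrow> 'a \<Rightarrow> real^'d) \<Rightarrow> (nat \<Rightarrow> 'a \<Rightarrow> real) \<Rightarrow> nat \<Rightarrow> 'a \<Rightarrow> real^'d" where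
  "Gamma_hat X Y n \<omega> = (1 / real n) *\<^sub>R (\<Sum>i\<in>{1..n}. Y i \<omega> *\<^sub>R X i \<omega>)"

definition beta_hat :: "(nat \<Rightarrow> 'a \<Rightarrow> real^'d) \<Rightarrow> (nat \<Rightarrow> 'a \<Rightarrow> real) \<Rightarrow> nat \<Rightarrow> 'a \<Rightarrow> real^'d" where
  "beta_hat X Y n \<omega> = matrix_inv (Sigma_hat X n \<omega>) *v Gamma_hat X Y n \<omega>"

definition vcov :: "'a measure \<Rightarrow> ('a \<Rightarrow> real^'d) \<Rightarrow> real^'d^'d" where
  "vcov M Z = integral\<^sup>L M (\<lambda>\<omega>. outer (Z \<omega> - integral\<^sup>L M Z) (Z \<omega> - integral\<^sup>L M Z))"

definition V_n :: "'a measure \<Rightarrow> (nat \<Rightarrow> 'a \<Rightarrow> real^'d) \<Rightarrow> (nat \<Rightarrow> 'a \<Rightarrow> real) \<Rightarrow> nat \<Rightarrow> real^'d^'d" where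
  "V_n M X Y n = vcov M (\<lambda>\<omega>. (1 / real n) *\<^sub>R
      (\<Sum>i\<in>{1..n}. (Y i \<omega> - X i \<omega> \<bullet> beta_pop M X Y n) *\<^sub>R X i \<omega>))"

definition psi :: "'a measure \<Rightarrow> (nat \<Rightarrow> 'a \<Rightarrow> real^'d) \<Rightarrow> (nat \<Rightarrow> 'a \<Rightarrow> real) \<Rightarrow> nat \<Rightarrow> nat \<Rightarrow> 'a \<Rightarrow> real^'d" where
  "psi M X Y n i \<omega> = matrix_inv (Sigma_n M X n) *v ((Y i \<omega> - X i \<omega> \<bullet> beta_pop M X Y n) *\<^sub>R X i \<omega>)"

definition D_Sigma :: "'a measure \<Rightarrow> (nat \<Rightarrow> 'a \<Rightarrow> real^'d) \<Rightarrow> nat \<Rightarrow> 'a \<Rightarrow> real" where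
  "D_Sigma M X n \<omega> = op_norm (matrix_inv (mat_sqrt (Sigma_n M X n)) ** Sigma_hat X n \<omega>
       ** matrix_inv (mat_sqrt (Sigma_n M X n)) - mat 1)"

end

theory Submission
  imports Defs
begin

lemma sym_inner:
  fixes M :: "real^'n^'n"
  assumes "transpose M = M"
  shows "x \<bullet> (M *v y) = (M *v x) \<bullet> y"
  by (metis assms dot_lmul_matrix transpose_matrix_vector)

lemma sym_from_inner:
  fixes A :: "real^'n^'n"
  assumes "\<And>x y. x \<bullet> (A *v y) = (A *v x) \<bullet> y"
  shows "transpose A = A"
proof -
  have "transpose A *v x = A *v x" for x
  proof -
    have "\<forall>y. (transpose A *v x - A *v x) \<bullet> y = 0"
      by (simp add: inner_diff_left assms dot_lmul_matrix)
    then show ?thesis by (metis inner_eq_zero_iff eq_iff_diff_eq_0)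
  qed
  then show ?thesis by (simp add: matrix_eq)
qed

lemma psd_zero_sub:
  fixes f :: "real^'n \<Rightarrow> real^'n"
  assumes lin: "linear f" and sym: "\<And>x y. x \<bullet> f y = f x \<bullet> y"
    and U: "subspace U" and nn: "\<forall>x\<in>U. 0 \<le> x \<bullet> f x"
    and u: "u \<in> U" and u0: "u \<bullet> f u = 0" and w: "w \<in> U"
  shows "w \<bullet> f u = 0"
proof (rule ccontr)
  assume ne: "w \<bullet> f u \<noteq> 0"
  define a where "a = w \<bullet> f u"
  define b where "b = w \<bullet> f w"
  have b0: "0 \<le> b" using nn w b_def by auto
  define t where "t = - a / (b + 1)"
  have "u + t *\<^sub>R w \<in> U" using U u w by (simp add: subspace_add subspace_scale)
  then have "0 \<le> (u + t *\<^sub>R w) \<bullet> f (u + t *\<^sub>R w)" using nn by auto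
  also have "\<dots> = u \<bullet> f u + t * (u \<bullet> f w) + t * (w \<bullet> f u) + t * t * (w \<bullet> f w)"
    by (simp add: linear_add[OF lin] linear_scale[OF lin] inner_add_left inner_add_right algebra_simps)
  also have "u \<bullet> f w = a" using sym[of u w] a_def by (simp add: inner_commute)
  finally have q: "0 \<le> 2 * t * a + t * t * b" using u0 a_def b_def by simp
  have ts: "t * (b+1) = -a" unfolding t_def using b0 by simp
  have e: "(b+1)*(b+1)*(2*t*a+t*t*b) = 2*(t*(b+1))*a*(b+1) + (t*(b+1))*(t*(b+1))*b"
    by (simp add: algebra_simps)
  also have "\<dots> = -(a*a)*(b+2)" unfolding ts by (simp add: algebra_simps)
  finally have e2: "(b+1)*(b+1)*(2*t*a+t*t*b) = -(a*a)*(b+2)" .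
  have "a \<noteq> 0" using ne a_def by simp
  then have "0 < a*a" by (metis not_real_square_gt_zero)
  then have "-(a*a)*(b+2) < 0" using b0 by (simp add: mult_pos_pos)
  then show False using e2 b0 q
    by (metis add_nonneg_nonneg mult_nonneg_nonneg not_less zero_le_one)
qed

lemma mat_linear: "linear ((*v) (M::real^'n^'n))"
  by (simp add: matrix_vector_mul_linear)

lemma eigen_exists:
  fixes M :: "real^'n^'n"
  assumes sym: "transpose M = M" and U: "subspace U" and ne: "U \<noteq> {0}"
    and inv: "\<forall>x\<in>U. M *v x \<in> U"
  obtains u m where "u \<in> U" "norm u = 1" "M *v u = m *\<^sub>R u"
proof -
  define K where "K = sphere 0 1 \<inter> U"
  have cK: "compact K" unfolding K_def
    by (simp add: U closed_subspace compact_Int_closed)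
  obtain x where x: "x \<in> U" "x \<noteq> 0" using ne U subspace_0 by blast
  have "x /\<^sub>R norm x \<in> K" using x U unfolding K_def by (simp add: subspace_scale)
  then have Kne: "(\<lambda>x. x \<bullet> (M *v x)) ` K \<noteq> {}" by blast
  have cont: "continuous_on K (\<lambda>x. x \<bullet> (M *v x))"
    by (intro continuous_intros matrix_vector_mult_linear_continuous_on)
  have "compact ((\<lambda>x. x \<bullet> (M *v x)) ` K)" using cK cont compact_continuous_image by blast
  then obtain u where u: "u \<in> K" and umax: "\<forall>y\<in>K. y \<bullet> (M *v y) \<le> u \<bullet> (M *v u)"
    using compact_attains_sup[OF _ Kne] by auto
  define m where "m = u \<bullet> (M *v u)"
  have uU: "u \<in> U" and un: "norm u = 1" using u K_def by auto
  have uu: "u \<bullet> u = 1" using un by (simp add: norm_eq_1)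
  define f where "f = (\<lambda>x. m *\<^sub>R x - M *v x)"
  have linf: "linear f" unfolding f_def
  proof (rule linearI)
    show "m *\<^sub>R (x + y) - M *v (x + y) = (m *\<^sub>R x - M *v x) + (m *\<^sub>R y - M *v y)" for x y
      by (simp add: scaleR_add_right matrix_vector_right_distrib)
    show "m *\<^sub>R (c *\<^sub>R x) - M *v (c *\<^sub>R x) = c *\<^sub>R (m *\<^sub>R x - M *v x)" for c x
      by (simp add: scaleR_right_diff_distrib matrix_vector_mult_scaleR)
  qed
  have symf: "x \<bullet> f y = f x \<bullet> y" for x y
  proof -
    have "x \<bullet> (M *v y) = (M *v x) \<bullet> y" by (rule sym_inner[OF sym])
    then show ?thesis unfolding f_def by (simp add: inner_diff_left inner_diff_right)
  qed
  have nn: "\<forall>x\<in>U. 0 \<le> x \<bullet> f x"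
  proof
    fix x assume xU: "x \<in> U"
    show "0 \<le> x \<bullet> f x"
    proof (cases "x = 0")
      case True then show ?thesis by (simp add: f_def)
    next
      case False
      define y where "y = x /\<^sub>R norm x"
      have "y \<in> K" using xU False U unfolding K_def y_def by (simp add: subspace_scale)
      then have "y \<bullet> (M *v y) \<le> m" using umax m_def by auto
      moreover have "y \<bullet> (M *v y) = (x \<bullet> (M *v x)) / (norm x)^2"
        unfolding y_def by (simp add: power2_eq_square matrix_vector_mult_scaleR divide_inverse_commute)
      ultimately have "x \<bullet> (M *v x) \<le> m * (norm x)^2" using False
        by (simp add: divide_le_eq)
      then show ?thesis unfolding f_def
        by (simp add: inner_diff_right power2_norm_eq_inner)
    qed
  qed
  have fu0: "u \<bullet> f u = 0" unfolding f_def m_def by (simp add: inner_diff_right uu)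
  have fuU: "f u \<in> U" unfolding f_def using U uU inv by (simp add: subspace_diff subspace_scale)
  have "f u \<bullet> f u = 0" using psd_zero_sub[OF linf symf U nn uU fu0 fuU] .
  then have "f u = 0" by simp
  then have "M *v u = m *\<^sub>R u" unfolding f_def by simp
  then show ?thesis using that uU un by blast
qed

definition eig_onb :: "real^'n^'n \<Rightarrow> (real^'n) set \<Rightarrow> bool" where
  "eig_onb M B \<longleftrightarrow> pairwise orthogonal B \<and> (\<forall>b\<in>B. norm b = 1 \<and> (\<exists>m. M *v b = m *\<^sub>R b))"

lemma eig_onb_indep: "eig_onb M B \<Longrightarrow> independent B"
  unfolding eig_onb_def by (metis norm_zero pairwise_orthogonal_independent zero_neq_one)

lemma eig_onb_step:
  fixes M :: "real^'n^'n"
  assumes sym: "transpose M = M" and B: "eig_onb M B" and k: "card B < CARD('n)"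
  shows "\<exists>B'. eig_onb M B' \<and> card B' = Suc (card B)"
proof -
  have ind: "independent B" using B by (rule eig_onb_indep)
  have fin: "finite B" using B unfolding eig_onb_def using pairwise_orthogonal_imp_finite by blast
  have "dim B = card B" using ind by (metis dim_span dim_span_eq_card_independent)
  then have "dim B < DIM(real^'n)" using k by simp
  then obtain x where x: "x \<noteq> 0" "\<And>y. y \<in> span B \<Longrightarrow> orthogonal x y"
    using orthogonal_to_subspace_exists by blast
  define U where "U = {y. \<forall>b\<in>B. orthogonal b y}"
  have U: "subspace U" unfolding U_def by (rule subspace_orthogonal_to_vectors)
  have "x \<in> U" unfolding U_def using x(2) span_base orthogonal_commute by blast
  then have Une: "U \<noteq> {0}" using x(1) by blast
  have inv: "\<forall>y\<in>U. M *v y \<in> U"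
  proof (intro ballI)
    fix y assume y: "y \<in> U"
    show "M *v y \<in> U" unfolding U_def
    proof (intro CollectI ballI)
      fix b assume b: "b \<in> B"
      then obtain m where m: "M *v b = m *\<^sub>R b" using B unfolding eig_onb_def by blast
      have "b \<bullet> (M *v y) = (M *v b) \<bullet> y" by (rule sym_inner[OF sym])
      also have "\<dots> = m * (b \<bullet> y)" by (simp add: m)
      also have "b \<bullet> y = 0" using y b unfolding U_def orthogonal_def by blast
      finally show "orthogonal b (M *v y)" unfolding orthogonal_def by simp
    qed
  qed
  obtain u m where u: "u \<in> U" "norm u = 1" "M *v u = m *\<^sub>R u"
    using eigen_exists[OF sym U Une inv] by blast
  have uB: "u \<notin> B"
  proof
    assume "u \<in> B"
    then have "orthogonal u u" using u(1) unfolding U_def by blast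
    then show False using u(2) by (simp add: orthogonal_def)
  qed
  have "eig_onb M (insert u B)"
    using B u uB unfolding eig_onb_def U_def pairwise_insert
    by (simp add: orthogonal_commute)
  moreover have "card (insert u B) = Suc (card B)" using fin uB by simp
  ultimately show ?thesis by blast
qed

lemma eig_onb_exists:
  fixes M :: "real^'n^'n"
  assumes sym: "transpose M = M"
  shows "\<exists>B. eig_onb M B \<and> span B = UNIV"
proof -
  have "\<And>k. k \<le> CARD('n) \<Longrightarrow> \<exists>B. eig_onb M B \<and> card B = k"
  proof -
    fix k show "k \<le> CARD('n) \<Longrightarrow> \<exists>B. eig_onb M B \<and> card B = k"
    proof (induction k)
      case 0 show ?case by (rule exI[of _ "{}"]) (simp add: eig_onb_def)
    next
      case (Suc k)
      then obtain B where "eig_onb M B" "card B = k" by auto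
      then show ?case using eig_onb_step[OF sym, of B] Suc.prems by auto
    qed
  qed
  then obtain B where B: "eig_onb M B" "card B = CARD('n)" by blast
  have "dim B = card B" using eig_onb_indep[OF B(1)] by (metis dim_span dim_span_eq_card_independent)
  then have "span B = UNIV" using B(2) dim_eq_full by fastforce
  then show ?thesis using B by blast
qed

lemma eig_onb_inner:
  assumes "eig_onb M B" "b \<in> B" "c \<in> B"
  shows "c \<bullet> b = (if c = b then 1 else 0)"
  using assms unfolding eig_onb_def pairwise_def orthogonal_def
  by (auto simp: norm_eq_1)

lemma lin_sum_lemma:
  fixes B :: "(real^'n) set" and lam :: "real^'n \<Rightarrow> real"
  shows "linear (\<lambda>x. (\<Sum>c\<in>B. (sqrt (lam c) * (c \<bullet> x)) *\<^sub>R c))"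
  by (rule linearI) (simp_all add: inner_add_right distrib_left scaleR_add_left sum.distrib scaleR_sum_right mult_ac)

lemma psd_sqrt_exists:
  fixes A :: "real^'n^'n"
  assumes A: "psd_mat A"
  shows "\<exists>S. psd_mat S \<and> S ** S = A"
proof -
  have sym: "transpose A = A" using A unfolding psd_mat_def by (rule conjunct1)
  obtain B where B: "eig_onb A B" and spB: "span B = UNIV" using eig_onb_exists[OF sym] by blast
  have fin: "finite B" using B unfolding eig_onb_def using pairwise_orthogonal_imp_finite by blast
  define lam where "lam = (\<lambda>b. b \<bullet> (A *v b))"
  have Ab: "A *v b = lam b *\<^sub>R b" if bB: "b \<in> B" for b
  proof -
    have "\<exists>m. A *v b = m *\<^sub>R b" using B bB unfolding eig_onb_def by auto
    then obtain m where m: "A *v b = m *\<^sub>R b" by (elim exE)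
    have "b \<bullet> b = 1" using eig_onb_inner[OF B bB bB] by simp
    then have "lam b = m" unfolding lam_def m by simp
    then show ?thesis using m by simp
  qed
  have Apsd: "\<forall>x. 0 \<le> x \<bullet> (A *v x)" using A unfolding psd_mat_def by (rule conjunct2)
  have lam0: "0 \<le> lam b" for b unfolding lam_def using Apsd by (rule spec)
  define f where "f = (\<lambda>x. (\<Sum>c\<in>B. (sqrt (lam c) * (c \<bullet> x)) *\<^sub>R c))"
  have linf: "linear f" unfolding f_def by (rule lin_sum_lemma)
  have fb: "f b = sqrt (lam b) *\<^sub>R b" if b: "b \<in> B" for b
  proof -
    have "f b = (\<Sum>c\<in>B. (if c = b then sqrt (lam c) *\<^sub>R c else 0))"
      unfolding f_def
    proof (rule sum.cong[OF refl])
      fix c assume c: "c \<in> B"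
      show "(sqrt (lam c) * (c \<bullet> b)) *\<^sub>R c = (if c = b then sqrt (lam c) *\<^sub>R c else 0)"
        using eig_onb_inner[OF B b c] by simp
    qed
    also have "\<dots> = sqrt (lam b) *\<^sub>R b" using fin b by (simp add: sum.delta)
    finally show ?thesis .
  qed
  have ffA: "f (f x) = A *v x" for x
  proof -
    have eqB: "(f \<circ> f) b = A *v b" if b: "b \<in> B" for b
    proof -
      have "f (f b) = sqrt (lam b) *\<^sub>R f b" using fb[OF b] linear_scale[OF linf] by simp
      also have "\<dots> = (sqrt (lam b) * sqrt (lam b)) *\<^sub>R b" using fb[OF b] by simp
      also have "\<dots> = lam b *\<^sub>R b" using lam0[of b] by simp
      finally show ?thesis using Ab[OF b] by simp
    qed
    have "x \<in> span B" using spB by simp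
    then have "(f \<circ> f) x = A *v x"
      using linear_eq_on_span[OF linear_compose[OF linf linf] mat_linear[of A], of B x] eqB by blast
    then show ?thesis by simp
  qed
  define S :: "real^'n^'n" where "S = matrix f"
  have linf': "Vector_Spaces.linear (*s) (*s) f" using linf by (simp only: linear_matrix_vector_mul_eq)
  have Sx: "S *v x = f x" for x
    unfolding S_def by (rule matrix_works[OF linf'])
  have symf: "x \<bullet> f y = f x \<bullet> y" for x y
    unfolding f_def by (simp add: inner_sum_right inner_sum_left inner_commute mult_ac)
  have t: "transpose S = S" by (rule sym_from_inner) (simp only: Sx symf)
  have p: "0 \<le> x \<bullet> (S *v x)" for x
  proof -
    have "x \<bullet> (S *v x) = (\<Sum>c\<in>B. sqrt (lam c) * ((c \<bullet> x) * (c \<bullet> x)))"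
      unfolding Sx f_def by (simp add: inner_sum_right inner_commute mult_ac)
    also have "\<dots> \<ge> 0" using lam0 by (intro sum_nonneg) simp
    finally show ?thesis .
  qed
  have s: "S ** S = A"
    by (simp only: matrix_eq matrix_vector_mul_assoc[symmetric] Sx ffA simp_thms)
  have "psd_mat S" unfolding psd_mat_def using t p by simp
  then show ?thesis using s by (intro exI[of _ S] conjI)
qed

lemma psd_kernel:
  fixes S :: "real^'n^'n"
  assumes "psd_mat S" "b \<bullet> (S *v b) = 0"
  shows "S *v b = 0"
proof -
  have sym: "transpose S = S" and nn: "\<forall>x. 0 \<le> x \<bullet> (S *v x)" using assms(1) unfolding psd_mat_def by auto
  have "(S *v b) \<bullet> (S *v b) = 0"
    by (rule psd_zero_sub[OF mat_linear _ subspace_UNIV _ UNIV_I assms(2) UNIV_I])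
       (use sym_inner[OF sym] nn in auto)
  then show ?thesis by simp
qed

lemma psd_sqrt_unique:
  fixes S T :: "real^'n^'n"
  assumes S: "psd_mat S" and T: "psd_mat T" and eq: "S ** S = T ** T"
  shows "S = T"
proof -
  have symS: "transpose S = S" and nnS: "\<forall>x. 0 \<le> x \<bullet> (S *v x)" using S unfolding psd_mat_def by auto
  have symT: "transpose T = T" and nnT: "\<forall>x. 0 \<le> x \<bullet> (T *v x)" using T unfolding psd_mat_def by auto
  define D where "D = S - T"
  have Dx: "D *v x = S *v x - T *v x" for x unfolding D_def by (simp add: matrix_vector_mult_diff_rdistrib)
  have symD: "transpose D = D"
    by (rule sym_from_inner) (simp add: Dx inner_diff_left inner_diff_right sym_inner[OF symS] sym_inner[OF symT])
  obtain B where B: "eig_onb D B" and spB: "span B = UNIV" using eig_onb_exists[OF symD] by blast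
  have SST: "S *v (S *v x) = T *v (T *v x)" for x
    using eq by (metis matrix_vector_mul_assoc)
  have Db0: "D *v b = 0" if b: "b \<in> B" for b
  proof -
    have "\<exists>m. D *v b = m *\<^sub>R b" using B b unfolding eig_onb_def by auto
    then obtain m where m: "D *v b = m *\<^sub>R b" by (elim exE)
    have bn: "b \<noteq> 0" using B b unfolding eig_onb_def by auto
    have e1: "m * (b \<bullet> (S *v b)) = b \<bullet> (S *v (S *v b)) - b \<bullet> (S *v (T *v b))"
    proof -
      have "m * (b \<bullet> (S *v b)) = b \<bullet> (S *v (m *\<^sub>R b))" by (simp add: matrix_vector_mult_scaleR)
      also have "\<dots> = b \<bullet> (S *v (S *v b - T *v b))" using m Dx[of b] by simp
      finally show ?thesis by (simp add: matrix_vector_mult_diff_distrib inner_diff_right)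
    qed
    have e2: "m * (b \<bullet> (T *v b)) = b \<bullet> (S *v (T *v b)) - b \<bullet> (T *v (T *v b))"
    proof -
      have "m * (b \<bullet> (T *v b)) = (m *\<^sub>R b) \<bullet> (T *v b)" by simp
      also have "\<dots> = (S *v b - T *v b) \<bullet> (T *v b)" using m Dx[of b] by simp
      also have "\<dots> = (S *v b) \<bullet> (T *v b) - (T *v b) \<bullet> (T *v b)" by (simp add: inner_diff_left)
      also have "(S *v b) \<bullet> (T *v b) = b \<bullet> (S *v (T *v b))" using sym_inner[OF symS, of b "T *v b"] by simp
      also have "(T *v b) \<bullet> (T *v b) = b \<bullet> (T *v (T *v b))" using sym_inner[OF symT, of b "T *v b"] by simp
      finally show ?thesis .
    qed
    have "m * (b \<bullet> (S *v b) + b \<bullet> (T *v b)) = 0"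
      using e1 e2 SST[of b] by (simp add: distrib_left)
    then have "m = 0 \<or> (b \<bullet> (S *v b) + b \<bullet> (T *v b)) = 0" by simp
    then show ?thesis
    proof
      assume "m = 0" then show ?thesis using m by simp
    next
      assume h: "b \<bullet> (S *v b) + b \<bullet> (T *v b) = 0"
      have "b \<bullet> (S *v b) = 0" "b \<bullet> (T *v b) = 0" using h nnS nnT
        by (metis add_nonneg_eq_0_iff)+
      then have "S *v b = 0" "T *v b = 0" using psd_kernel S T by blast+
      then show ?thesis using Dx by simp
    qed
  qed
  have "D *v x = 0" for x
    using linear_eq_0_on_span[OF mat_linear[of D], of B x] Db0 spB by blast
  then have "S *v x = T *v x" for x using Dx by simp
  then show ?thesis by (simp add: matrix_eq)
qed

lemma mat_sqrt_props:
  fixes A :: "real^'n^'n"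
  assumes "psd_mat A"
  shows "psd_mat (mat_sqrt A)" "mat_sqrt A ** mat_sqrt A = A"
proof -
  have "\<exists>!S. psd_mat S \<and> S ** S = A"
    using psd_sqrt_exists[OF assms] psd_sqrt_unique by metis
  then have "psd_mat (mat_sqrt A) \<and> mat_sqrt A ** mat_sqrt A = A"
    unfolding mat_sqrt_def by (rule theI')
  then show "psd_mat (mat_sqrt A)" "mat_sqrt A ** mat_sqrt A = A" by auto
qed

lemma inv_props:
  fixes A :: "real^'n^'n"
  assumes "invertible A"
  shows "A ** matrix_inv A = mat 1" "matrix_inv A ** A = mat 1"
proof -
  have "\<exists>A'. A ** A' = mat 1 \<and> A' ** A = mat 1" using assms unfolding invertible_def by blast
  then have "A ** matrix_inv A = mat 1 \<and> matrix_inv A ** A = mat 1"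
    unfolding matrix_inv_def by (rule someI_ex)
  then show "A ** matrix_inv A = mat 1" "matrix_inv A ** A = mat 1" by auto
qed

lemma inv_vec:
  fixes A :: "real^'n^'n"
  assumes "invertible A"
  shows "A *v (matrix_inv A *v v) = v" "matrix_inv A *v (A *v v) = v"
  using inv_props[OF assms] by (metis matrix_vector_mul_assoc matrix_vector_mul_lid)+

lemma inv_unique_vec:
  fixes A B :: "real^'n^'n"
  assumes "\<And>v. B *v (A *v v) = v"
  shows "invertible A" "matrix_inv A = B"
proof -
  have BA: "B ** A = mat 1" using assms by (simp add: matrix_eq matrix_vector_mul_assoc[symmetric])
  then have AB: "A ** B = mat 1" using matrix_left_right_inverse by blast
  show inv: "invertible A" unfolding invertible_def using AB BA by blast
  have "matrix_inv A = (B ** A) ** matrix_inv A" using BA by simp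
  also have "\<dots> = B" using inv_props(1)[OF inv] by (metis matrix_mul_assoc matrix_mul_rid)
  finally show "matrix_inv A = B" .
qed

lemma inv_sym:
  fixes A :: "real^'n^'n"
  assumes "invertible A" "transpose A = A"
  shows "transpose (matrix_inv A) = matrix_inv A"
proof (rule sym_from_inner)
  fix x y
  have "x \<bullet> (matrix_inv A *v y) = (A *v (matrix_inv A *v x)) \<bullet> (matrix_inv A *v y)"
    using inv_vec(1)[OF assms(1)] by simp
  also have "\<dots> = (matrix_inv A *v x) \<bullet> (A *v (matrix_inv A *v y))"
    using sym_inner[OF assms(2)] by metis
  also have "\<dots> = (matrix_inv A *v x) \<bullet> y" using inv_vec(1)[OF assms(1)] by simp
  finally show "x \<bullet> (matrix_inv A *v y) = (matrix_inv A *v x) \<bullet> y" .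
qed

lemma psd_alt:
  fixes A :: "real^'n^'n"
  shows "psd_mat A \<longleftrightarrow> (\<forall>x y. x \<bullet> (A *v y) = (A *v x) \<bullet> y) \<and> (\<forall>x. 0 \<le> x \<bullet> (A *v x))"
  unfolding psd_mat_def using sym_inner sym_from_inner by metis

lemma outer_mult: "outer x y *v v = (y \<bullet> v) *\<^sub>R x"
  by (simp add: outer_def matrix_vector_mult_def vec_eq_iff inner_vec_def sum_distrib_left mult_ac)

lemma bl_form: "bounded_linear (\<lambda>A::real^'n^'n. x \<bullet> (A *v y))"
  unfolding linear_conv_bounded_linear[symmetric]
  by (rule linearI) (simp_all add: matrix_vector_mult_add_rdistrib inner_add_right scaleR_matrix_vector_assoc[symmetric])

lemma psd_integral_outer:
  fixes Z :: "'a \<Rightarrow> real^'n"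
  shows "psd_mat (integral\<^sup>L M (\<lambda>\<omega>. outer (Z \<omega>) (Z \<omega>)))"
proof (cases "integrable M (\<lambda>\<omega>. outer (Z \<omega>) (Z \<omega>))")
  case False
  then show ?thesis by (simp add: not_integrable_integral_eq psd_mat_def transpose_mat[of 0, simplified])
next
  case True
  have F: "x \<bullet> (integral\<^sup>L M (\<lambda>\<omega>. outer (Z \<omega>) (Z \<omega>)) *v y) = integral\<^sup>L M (\<lambda>\<omega>. (Z \<omega> \<bullet> x) * (Z \<omega> \<bullet> y))" for x y
  proof -
    have "x \<bullet> (integral\<^sup>L M (\<lambda>\<omega>. outer (Z \<omega>) (Z \<omega>)) *v y) = integral\<^sup>L M (\<lambda>\<omega>. x \<bullet> (outer (Z \<omega>) (Z \<omega>) *v y))"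
      using integral_bounded_linear[OF bl_form True] by simp
    then show ?thesis by (simp add: outer_mult inner_commute mult_ac)
  qed
  show ?thesis unfolding psd_alt
  proof (intro conjI allI)
    fix x y show "x \<bullet> (integral\<^sup>L M (\<lambda>\<omega>. outer (Z \<omega>) (Z \<omega>)) *v y) = (integral\<^sup>L M (\<lambda>\<omega>. outer (Z \<omega>) (Z \<omega>)) *v x) \<bullet> y"
      using F[of x y] F[of y x] by (simp add: inner_commute mult_ac)
  next
    fix x show "0 \<le> x \<bullet> (integral\<^sup>L M (\<lambda>\<omega>. outer (Z \<omega>) (Z \<omega>)) *v x)"
      unfolding F by (rule integral_nonneg_AE) simp
  qed
qed

lemma psd_add:
  assumes "psd_mat A" "psd_mat B" shows "psd_mat (A + B)"
proof -
  have a: "\<And>x y. x \<bullet> (A *v y) = (A *v x) \<bullet> y" "\<And>x. 0 \<le> x \<bullet> (A *v x)" using assms(1) unfolding psd_alt by auto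
  have b: "\<And>x y. x \<bullet> (B *v y) = (B *v x) \<bullet> y" "\<And>x. 0 \<le> x \<bullet> (B *v x)" using assms(2) unfolding psd_alt by auto
  show ?thesis unfolding psd_alt matrix_vector_mult_add_rdistrib inner_add_right inner_add_left
    using a b by (metis add_nonneg_nonneg)
qed

lemma psd_zero: "psd_mat (0::real^'n^'n)"
  unfolding psd_alt by simp

lemma psd_sum: "finite I \<Longrightarrow> (\<And>i. i \<in> I \<Longrightarrow> psd_mat (f i)) \<Longrightarrow> psd_mat (\<Sum>i\<in>I. f i :: real^'n^'n)"
  by (induction I rule: finite_induct) (auto intro: psd_add psd_zero)

lemma psd_scale:
  assumes "0 \<le> c" "psd_mat A" shows "psd_mat (c *\<^sub>R A)"
proof -
  have a: "\<And>x y. x \<bullet> (A *v y) = (A *v x) \<bullet> y" "\<And>x. 0 \<le> x \<bullet> (A *v x)" using assms(2) unfolding psd_alt by auto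
  show ?thesis unfolding psd_alt scaleR_matrix_vector_assoc[symmetric] inner_scaleR_right inner_scaleR_left
    using a assms(1) by (metis mult_nonneg_nonneg)
qed

lemma bl_mat: "bounded_linear ((*v) (A::real^'n^'n))"
  using mat_linear linear_conv_bounded_linear by blast

lemma op_norm_bound: "norm (A *v x) \<le> op_norm A * norm (x::real^'n)"
  unfolding op_norm_def by (rule onorm[OF bl_mat])

lemma op_norm_nonneg: "0 \<le> op_norm (A::real^'n^'n)"
  unfolding op_norm_def by (rule onorm_pos_le[OF bl_mat])

lemma neumann:
  fixes A :: "real^'n^'n"
  defines "d \<equiv> op_norm (A - mat 1)"
  assumes d1: "d < 1"
  shows "invertible A" "norm (matrix_inv A *v y - y) \<le> d / (1 - d) * norm y"
proof -
  have Ex: "(A - mat 1) *v x = A *v x - x" for x by (simp add: matrix_vector_mult_diff_rdistrib)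
  have nE: "norm (A *v x - x) \<le> d * norm x" for x using op_norm_bound[of "A - mat 1" x] Ex d_def by simp
  have low: "(1 - d) * norm x \<le> norm (A *v x)" for x
  proof -
    have "norm x = norm (A *v x - (A *v x - x))" by simp
    also have "\<dots> \<le> norm (A *v x) + norm (A *v x - x)" by (rule norm_triangle_ineq4)
    finally have "norm x \<le> norm (A *v x) + norm (A *v x - x)" .
    then show ?thesis using nE[of x] by (simp add: algebra_simps)
  qed
  have "inj ((*v) A)"
  proof (rule injI)
    fix x y assume "A *v x = A *v y"
    then have "A *v (x - y) = 0" by (simp add: matrix_vector_mult_diff_distrib)
    then have "(1 - d) * norm (x - y) \<le> 0" using low[of "x - y"] by simp
    then have "norm (x - y) \<le> 0" using d1 by (simp add: mult_le_0_iff)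
    then show "x = y" by simp
  qed
  then show inv: "invertible A" using matrix_left_invertible_injective invertible_left_inverse by blast
  define x where "x = matrix_inv A *v y"
  have Ax: "A *v x = y" unfolding x_def by (rule inv_vec(1)[OF inv])
  have "(1 - d) * norm x \<le> norm y" using low[of x] Ax by simp
  then have nx: "norm x \<le> norm y / (1 - d)" using d1 by (simp add: field_simps)
  have "norm (matrix_inv A *v y - y) = norm (x - A *v x)" using x_def Ax by simp
  also have "\<dots> = norm (A *v x - x)" by (rule norm_minus_commute)
  also have "\<dots> \<le> d * norm x" by (rule nE)
  also have "\<dots> \<le> d * (norm y / (1 - d))"
  proof -
    have "0 \<le> d" unfolding d_def by (rule op_norm_nonneg)
    then show ?thesis using nx by (rule mult_left_mono[rotated])
  qed
  finally show "norm (matrix_inv A *v y - y) \<le> d / (1 - d) * norm y" by simp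
qed

lemma sum_mat_vec: "finite I \<Longrightarrow> (\<Sum>i\<in>I. f i :: real^'n^'m) *v v = (\<Sum>i\<in>I. f i *v v)"
  by (induction I rule: finite_induct) (simp_all add: matrix_vector_mult_add_rdistrib)

lemma diag_entry: "(B :: real^'n^'n) $ j $ j = axis j 1 \<bullet> (B *v axis j 1)"
proof -
  have "(B *v axis j 1) $ j = B $ j $ j" by (simp add: matrix_vector_mult_basis column_def)
  then show ?thesis by (simp add: cart_eq_inner_axis inner_commute)
qed

lemma psd_sym: "psd_mat A \<Longrightarrow> transpose A = A" unfolding psd_mat_def by simp

lemma sqrt_inv:
  fixes S :: "real^'n^'n"
  assumes "psd_mat S" "invertible S"
  shows "invertible (mat_sqrt S)"
proof -
  have "det S \<noteq> 0" using assms(2) invertible_det_nz by blast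
  then have "det (mat_sqrt S) * det (mat_sqrt S) \<noteq> 0"
    using mat_sqrt_props(2)[OF assms(1)] det_mul by metis
  then show ?thesis using invertible_det_nz by fastforce
qed

theorem mainTheorem2:
  fixes M :: "'a measure" and X :: "nat \<Rightarrow> 'a \<Rightarrow> real^'d" and Y :: "nat \<Rightarrow> 'a \<Rightarrow> real"
    and n :: nat and \<omega> :: 'a
  assumes "prob_space M"
    and "\<And>i. i \<in> {1..n} \<Longrightarrow> X i \<in> borel_measurable M"
    and "\<And>i. i \<in> {1..n} \<Longrightarrow> Y i \<in> borel_measurable M"
    and "\<And>i. i \<in> {1..n} \<Longrightarrow> integrable M (\<lambda>\<omega>. (norm (X i \<omega>))\<^sup>2)"
    and "\<And>i. i \<in> {1..n} \<Longrightarrow> integrable M (\<lambda>\<omega>. (Y i \<omega>)\<^sup>2)"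
    and "invertible (Sigma_n M X n)"
    and "invertible (V_n M X Y n)"
    and "\<omega> \<in> space M"
    and "D_Sigma M X n \<omega> < 1"
  shows "Max ((\<lambda>j. \<bar>(beta_hat X Y n \<omega> $ j - beta_pop M X Y n $ j
              - (1 / real n) * (\<Sum>i\<in>{1..n}. psi M X Y n i \<omega> $ j))
            / sqrt ((matrix_inv (Sigma_n M X n) ** V_n M X Y n ** matrix_inv (Sigma_n M X n)) $ j $ j)\<bar>) ` UNIV)
    \<le> cond_num (matrix_inv (mat_sqrt (Sigma_n M X n)) ** mat_sqrt (V_n M X Y n))
       * (D_Sigma M X n \<omega> / (1 - D_Sigma M X n \<omega>))
       * wnorm (Sigma_n M X n ** matrix_inv (V_n M X Y n) ** Sigma_n M X n)
           ((1 / real n) *\<^sub>R (\<Sum>i\<in>{1..n}. psi M X Y n i \<omega>))"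
proof -
  define S where "S = Sigma_n M X n"
  define V where "V = V_n M X Y n"
  define Sh where "Sh = Sigma_hat X n \<omega>"
  define P where "P = mat_sqrt S"
  define Pi where "Pi = matrix_inv P"
  define W where "W = mat_sqrt V"
  define Wi where "Wi = matrix_inv W"
  define Si where "Si = matrix_inv S"
  define Vi where "Vi = matrix_inv V"
  define bt where "bt = beta_pop M X Y n"
  define g where "g = (1 / real n) *\<^sub>R (\<Sum>i\<in>{1..n}. (Y i \<omega> - X i \<omega> \<bullet> bt) *\<^sub>R X i \<omega>)"
  define ps where "ps = (1 / real n) *\<^sub>R (\<Sum>i\<in>{1..n}. psi M X Y n i \<omega>)"
  define Dd where "Dd = D_Sigma M X n \<omega>"
  define A where "A = Pi ** Sh ** Pi"
  have invS: "invertible S" using assms(6) S_def by simp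
  have invV: "invertible V" using assms(7) V_def by simp
  have psdS: "psd_mat S" unfolding S_def Sigma_n_def
    by (intro psd_scale psd_sum psd_integral_outer) auto
  have psdV: "psd_mat V" unfolding V_def V_n_def vcov_def by (rule psd_integral_outer)
  have psdP: "psd_mat P" and PP: "P ** P = S" using mat_sqrt_props[OF psdS] P_def by auto
  have psdW: "psd_mat W" and WW: "W ** W = V" using mat_sqrt_props[OF psdV] W_def by auto
  have invP: "invertible P" unfolding P_def by (rule sqrt_inv[OF psdS invS])
  have invW: "invertible W" unfolding W_def by (rule sqrt_inv[OF psdV invV])
  have symS: "transpose S = S" using psdS by (rule psd_sym)
  have symP: "transpose P = P" using psdP by (rule psd_sym)
  have symW: "transpose W = W" using psdW by (rule psd_sym)
  have symPi: "transpose Pi = Pi" unfolding Pi_def by (rule inv_sym[OF invP symP])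
  have symWi: "transpose Wi = Wi" unfolding Wi_def by (rule inv_sym[OF invW symW])
  have PPv: "P *v (P *v x) = S *v x" for x using PP by (simp add: matrix_vector_mul_assoc)
  have WWv: "W *v (W *v x) = V *v x" for x using WW by (simp add: matrix_vector_mul_assoc)
  have PPi: "P *v (Pi *v x) = x" "Pi *v (P *v x) = x" for x unfolding Pi_def using inv_vec[OF invP] by auto
  have WWi: "W *v (Wi *v x) = x" "Wi *v (W *v x) = x" for x unfolding Wi_def using inv_vec[OF invW] by auto
  have Siv: "Si *v x = Pi *v (Pi *v x)" for x
  proof -
    have "(Pi ** Pi) *v (S *v v) = v" for v
      by (simp add: matrix_vector_mul_assoc[symmetric] PPv[symmetric] PPi)
    then have "matrix_inv S = Pi ** Pi" by (rule inv_unique_vec(2))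
    then show ?thesis unfolding Si_def by (simp add: matrix_vector_mul_assoc)
  qed
  have Viv: "Vi *v x = Wi *v (Wi *v x)" for x
  proof -
    have "(Wi ** Wi) *v (V *v v) = v" for v
      by (simp add: matrix_vector_mul_assoc[symmetric] WWv[symmetric] WWi)
    then have "matrix_inv V = Wi ** Wi" by (rule inv_unique_vec(2))
    then show ?thesis unfolding Vi_def by (simp add: matrix_vector_mul_assoc)
  qed
  have SSi: "S *v (Si *v x) = x" "Si *v (S *v x) = x" for x unfolding Si_def using inv_vec[OF invS] by auto
  have DdA: "Dd = op_norm (A - mat 1)" unfolding Dd_def D_Sigma_def A_def Pi_def P_def S_def Sh_def ..
  have Dd1: "Dd < 1" using assms(9) Dd_def by simp
  have Dd0: "0 \<le> Dd" unfolding DdA by (rule op_norm_nonneg)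
  have invA: "invertible A" using neumann(1)[of A] Dd1 DdA by simp
  define Ai where "Ai = matrix_inv A"
  have nr: "norm (Ai *v y - y) \<le> Dd / (1 - Dd) * norm y" for y
    using neumann(2)[of A y] Dd1 DdA Ai_def by simp
  have AAi: "A *v (Ai *v x) = x" "Ai *v (A *v x) = x" for x unfolding Ai_def using inv_vec[OF invA] by auto
  have Av: "A *v u = Pi *v (Sh *v (Pi *v u))" for u unfolding A_def by (simp add: matrix_vector_mul_assoc[symmetric])
  have Shv: "Sh *v v = P *v (A *v (P *v v))" for v by (simp add: Av PPi)
  have Shiv: "matrix_inv Sh *v v = Pi *v (Ai *v (Pi *v v))" for v
  proof -
    have "(Pi ** Ai ** Pi) *v (Sh *v v) = v" for v
      by (simp add: matrix_vector_mul_assoc[symmetric] Shv PPi AAi)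
    then have "matrix_inv Sh = Pi ** Ai ** Pi" by (rule inv_unique_vec(2))
    then show ?thesis by (simp add: matrix_vector_mul_assoc[symmetric])
  qed
  have Shbt: "Sh *v bt = (1 / real n) *\<^sub>R (\<Sum>i\<in>{1..n}. (X i \<omega> \<bullet> bt) *\<^sub>R X i \<omega>)"
    unfolding Sh_def Sigma_hat_def
    by (simp add: scaleR_matrix_vector_assoc[symmetric] sum_mat_vec outer_mult)
  have Gh: "Gamma_hat X Y n \<omega> = Sh *v bt + g"
    unfolding Shbt g_def Gamma_hat_def
    by (simp add: scaleR_add_right[symmetric] sum.distrib[symmetric] scaleR_diff_left)
  have bh: "beta_hat X Y n \<omega> = bt + matrix_inv Sh *v g"
  proof -
    have "beta_hat X Y n \<omega> = matrix_inv Sh *v (Sh *v bt + g)" unfolding beta_hat_def Gh Sh_def ..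
    also have "\<dots> = bt + matrix_inv Sh *v g" by (simp add: matrix_vector_right_distrib Shiv Shv PPi AAi)
    finally show ?thesis .
  qed
  have psv: "ps = Si *v g"
    unfolding ps_def g_def psi_def Si_def[symmetric] S_def[symmetric] bt_def[symmetric]
    by (simp add: vec.sum matrix_vector_mult_scaleR)
  have psj: "(1 / real n) * (\<Sum>i\<in>{1..n}. psi M X Y n i \<omega> $ j) = ps $ j" for j
    unfolding ps_def by (simp add: sum_component)
  define u where "u = Pi *v g"
  define r where "r = Ai *v u - u"
  define Delta where "Delta = beta_hat X Y n \<omega> - bt - ps"
  have Dr: "Delta = Pi *v r"
    unfolding Delta_def bh psv r_def u_def by (simp add: Shiv Siv matrix_vector_mult_diff_distrib)
  have symPv: "a \<bullet> (P *v b) = (P *v a) \<bullet> b" for a b by (rule sym_inner[OF symP])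
  have symPiv: "a \<bullet> (Pi *v b) = (Pi *v a) \<bullet> b" for a b by (rule sym_inner[OF symPi])
  have symWv: "a \<bullet> (W *v b) = (W *v a) \<bullet> b" for a b by (rule sym_inner[OF symW])
  have symWiv: "a \<bullet> (Wi *v b) = (Wi *v a) \<bullet> b" for a b by (rule sym_inner[OF symWi])
  have symSv: "a \<bullet> (S *v b) = (S *v a) \<bullet> b" for a b by (rule sym_inner[OF symS])
  have key: "e \<bullet> Delta = (W *v (Si *v e)) \<bullet> (Wi *v (P *v r))" for e
  proof -
    have "(W *v (Si *v e)) \<bullet> (Wi *v (P *v r)) = (Wi *v (W *v (Si *v e))) \<bullet> (P *v r)" by (rule symWiv)
    also have "\<dots> = (Si *v e) \<bullet> (P *v r)" by (simp add: WWi)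
    also have "\<dots> = (P *v (Si *v e)) \<bullet> r" by (rule symPv)
    also have "\<dots> = (Pi *v e) \<bullet> r" by (simp add: Siv PPi)
    also have "\<dots> = e \<bullet> (Pi *v r)" by (rule symPiv[symmetric])
    finally show ?thesis using Dr by simp
  qed
  have den: "(matrix_inv S ** V ** matrix_inv S) $ j $ j = norm (W *v (Si *v axis j 1)) ^ 2" for j
  proof -
    let ?e = "axis j 1 :: real^'d"
    have "(matrix_inv S ** V ** matrix_inv S) $ j $ j = ?e \<bullet> (Si *v (W *v (W *v (Si *v ?e))))"
      unfolding diag_entry Si_def[symmetric] by (simp add: matrix_vector_mul_assoc[symmetric] WWv)
    also have "\<dots> = (W *v (Si *v ?e)) \<bullet> (W *v (Si *v ?e))"
      using sym_inner[OF inv_sym[OF invS symS], of ?e "W *v (W *v (Si *v ?e))"] symWv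
      unfolding Si_def by metis
    finally show ?thesis by (simp add: power2_norm_eq_inner)
  qed
  define q where "q = Dd / (1 - Dd)"
  have q0: "0 \<le> q" unfolding q_def using Dd0 Dd1 by simp
  have wn: "wnorm (S ** Vi ** S) ps = norm (Wi *v g)"
  proof -
    have "ps \<bullet> ((S ** Vi ** S) *v ps) = ps \<bullet> (S *v (Wi *v (Wi *v g)))"
      by (simp add: matrix_vector_mul_assoc[symmetric] Viv psv SSi)
    also have "\<dots> = (S *v ps) \<bullet> (Wi *v (Wi *v g))" by (rule symSv)
    also have "\<dots> = (Wi *v g) \<bullet> (Wi *v g)" unfolding psv SSi using symWiv by metis
    finally show ?thesis unfolding wnorm_def by (simp add: norm_eq_sqrt_inner)
  qed
  have cn: "cond_num (Pi ** W) = op_norm (Wi ** P) * op_norm (Pi ** W)"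
  proof -
    have "(Wi ** P) *v ((Pi ** W) *v v) = v" for v
      by (simp add: matrix_vector_mul_assoc[symmetric] PPi WWi)
    then have "matrix_inv (Pi ** W) = Wi ** P" by (rule inv_unique_vec(2))
    then show ?thesis unfolding cond_num_def by simp
  qed
  define K where "K = op_norm (Wi ** P) * (q * (op_norm (Pi ** W) * norm (Wi *v g)))"
  have bound: "\<bar>Delta $ j\<bar> \<le> norm (W *v (Si *v axis j 1)) * K" for j
  proof -
    let ?a = "norm (W *v (Si *v axis j 1))"
    have "\<bar>Delta $ j\<bar> = \<bar>(W *v (Si *v axis j 1)) \<bullet> (Wi *v (P *v r))\<bar>"
      using key[of "axis j 1"] by (simp add: cart_eq_inner_axis inner_commute)
    also have "\<dots> \<le> ?a * norm (Wi *v (P *v r))" by (rule Cauchy_Schwarz_ineq2)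
    also have "norm (Wi *v (P *v r)) \<le> op_norm (Wi ** P) * norm r"
      using op_norm_bound[of "Wi ** P" r] by (simp add: matrix_vector_mul_assoc[symmetric])
    also have "norm r \<le> q * norm u" unfolding r_def q_def by (rule nr)
    also have "norm u \<le> op_norm (Pi ** W) * norm (Wi *v g)"
      using op_norm_bound[of "Pi ** W" "Wi *v g"] unfolding u_def by (simp add: matrix_vector_mul_assoc[symmetric] WWi)
    finally show ?thesis unfolding K_def
      by (simp add: mult_left_mono q0 op_norm_nonneg mult_nonneg_nonneg)
  qed
  have K0: "0 \<le> K" unfolding K_def by (intro mult_nonneg_nonneg q0 op_norm_nonneg norm_ge_zero)
  have RHS: "cond_num (matrix_inv (mat_sqrt (Sigma_n M X n)) ** mat_sqrt (V_n M X Y n))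
       * (D_Sigma M X n \<omega> / (1 - D_Sigma M X n \<omega>))
       * wnorm (Sigma_n M X n ** matrix_inv (V_n M X Y n) ** Sigma_n M X n)
           ((1 / real n) *\<^sub>R (\<Sum>i\<in>{1..n}. psi M X Y n i \<omega>)) = K"
    unfolding S_def[symmetric] V_def[symmetric] P_def[symmetric] Pi_def[symmetric] W_def[symmetric]
      Vi_def[symmetric] Dd_def[symmetric] ps_def[symmetric] q_def[symmetric] cn wn K_def
    by (simp add: mult_ac)
  have each: "\<bar>(beta_hat X Y n \<omega> $ j - beta_pop M X Y n $ j
              - (1 / real n) * (\<Sum>i\<in>{1..n}. psi M X Y n i \<omega> $ j))
            / sqrt ((matrix_inv (Sigma_n M X n) ** V_n M X Y n ** matrix_inv (Sigma_n M X n)) $ j $ j)\<bar> \<le> K" for j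
  proof -
    let ?a = "norm (W *v (Si *v axis j 1))"
    have num: "beta_hat X Y n \<omega> $ j - beta_pop M X Y n $ j
              - (1 / real n) * (\<Sum>i\<in>{1..n}. psi M X Y n i \<omega> $ j) = Delta $ j"
      unfolding psj Delta_def bt_def by simp
    have sq: "sqrt ((matrix_inv (Sigma_n M X n) ** V_n M X Y n ** matrix_inv (Sigma_n M X n)) $ j $ j) = ?a"
      unfolding S_def[symmetric] V_def[symmetric] den by simp
    show ?thesis
    proof (cases "?a = 0")
      case True
      have "\<bar>Delta $ j / ?a\<bar> = 0" using True by simp
      then show ?thesis unfolding num sq using K0 by linarith
    next
      case False
      then have a0: "0 < ?a" by simp
      have "\<bar>Delta $ j / ?a\<bar> = \<bar>Delta $ j\<bar> / ?a" using a0 by (simp add: abs_divide)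
      also have "\<dots> \<le> K" using bound[of j] a0 by (simp add: pos_divide_le_eq mult.commute)
      finally show ?thesis unfolding num sq .
    qed
  qed
  show ?thesis unfolding RHS
  proof (rule Max.boundedI)
    show "finite ((\<lambda>j. \<bar>(beta_hat X Y n \<omega> $ j - beta_pop M X Y n $ j
              - (1 / real n) * (\<Sum>i\<in>{1..n}. psi M X Y n i \<omega> $ j))
            / sqrt ((matrix_inv (Sigma_n M X n) ** V_n M X Y n ** matrix_inv (Sigma_n M X n)) $ j $ j)\<bar>) ` UNIV)"
      by (rule finite_imageI) simp
    show "(\<lambda>j. \<bar>(beta_hat X Y n \<omega> $ j - beta_pop M X Y n $ j
              - (1 / real n) * (\<Sum>i\<in>{1..n}. psi M X Y n i \<omega> $ j))
            / sqrt ((matrix_inv (Sigma_n M X n) ** V_n M X Y n ** matrix_inv (Sigma_n M X n)) $ j $ j)\<bar>) ` UNIV \<noteq> {}"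
      by simp
  next
    fix a assume "a \<in> (\<lambda>j. \<bar>(beta_hat X Y n \<omega> $ j - beta_pop M X Y n $ j
              - (1 / real n) * (\<Sum>i\<in>{1..n}. psi M X Y n i \<omega> $ j))
            / sqrt ((matrix_inv (Sigma_n M X n) ** V_n M X Y n ** matrix_inv (Sigma_n M X n)) $ j $ j)\<bar>) ` UNIV"
    then obtain j where "a = \<bar>(beta_hat X Y n \<omega> $ j - beta_pop M X Y n $ j
              - (1 / real n) * (\<Sum>i\<in>{1..n}. psi M X Y n i \<omega> $ j))
            / sqrt ((matrix_inv (Sigma_n M X n) ** V_n M X Y n ** matrix_inv (Sigma_n M X n)) $ j $ j)\<bar>"
      by (rule imageE)
    then show "a \<le> K" using each[of j] by simp
  qed
qed

end
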